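(* Let $f(a,b,c,d,e,x,y)$ be analytic in a neighbourhood of the origin of $\mathbb{C}^7$, and for fixed $(a,b,c,d,e)$ write $F(X,Y)=f(a,b,c,d,e,X,Y)$. The following are equivalent. (i) In some neighbourhood of the origin, $f$ satisfies $$x\Big\{F(xq,y)-F(xq,yq)-(d+e)q^{-1}\big[F(xq,yq)-F(xq,yq^2)\big]+de\,q^{-2}\big[F(xq,yq^2)-F(xq,yq^3)\big]\Big\}$$ $$=y\Big\{\big[F(xq,yq)-F(x,yq)\big]-(a+b+c)\big[F(xq,yq^2)-F(x,yq^2)\big]+(ab+ac+bc)\big[F(xq,yq^3)-F(x,yq^3)\big]-abc\big[F(xq,yq^4)-F(x,yq^4)\big]\Big\}.$$ (ii) There exist functions $\mu_n=\mu_n(a,b,c,d,e)$, $n\ge0$, defined near the origin of $\mathbb{C}^5$, such that $$f=\sum_{n\ge0}\mu_n\,\psi_n^{(a,b,c;d,e)}(x,y|q).$$ This identity is meant as an identity of power series in $(x,y)$: for all $j,k\ge0$, the coefficient of $x^jy^k$ in the Taylor expansion of $f$ in $(x,y)$ equals $\mu_{j+k}$ times the coefficient of $x^jy^k$ in $\psi_{j+k}^{(a,b,c;d,e)}(x,y|q)$.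
   Context: Throughout, $0<q<1$. For $\alpha\in\mathbb{C}$, $(\alpha;q)_0=1$, $(\alpha;q)_n=\prod_{j=0}^{n-1}(1-\alpha q^j)$, $(\alpha;q)_\infty=\prod_{j\ge0}(1-\alpha q^j)$, and $(\alpha_1,\dots,\alpha_r;q)_n=\prod_i(\alpha_i;q)_n$. The $q$-binomial coefficient is $\begin{bmatrix}n\\k\end{bmatrix}=\frac{(q;q)_n}{(q;q)_k(q;q)_{n-k}}$. The polynomials $\psi_n$ are $$\psi_n^{(a,b,c;d,e)}(x,y|q)=\sum_{k=0}^n\begin{bmatrix}n\\k\end{bmatrix}\frac{(-1)^kq^{k(k-n)}(a,b,c;q)_k}{(d,e;q)_k}x^{n-k}y^k,$$ with $d,e\notin\{q^{-m}:m\ge0\}$. *)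

theory Defs
  imports "HOL-Analysis.Analysis"
begin

definition qpoch :: "complex \<Rightarrow> real \<Rightarrow> nat \<Rightarrow> complex" where
  "qpoch \<alpha> q n = (\<Prod>j<n. 1 - \<alpha> * complex_of_real q ^ j)"

definition qbinom :: "real \<Rightarrow> nat \<Rightarrow> nat \<Rightarrow> complex" where
  "qbinom q n k = qpoch (complex_of_real q) q n /
      (qpoch (complex_of_real q) q k * qpoch (complex_of_real q) q (n - k))"

text \<open>Coefficient of x^(n-k) y^k in psi_n^(a,b,c;d,e)(x,y|q), for k \<le> n.\<close>
definition psi_coeff :: "complex \<Rightarrow> complex \<Rightarrow> complex \<Rightarrow> complex \<Rightarrow> complex \<Rightarrow> real
    \<Rightarrow> nat \<Rightarrow> nat \<Rightarrow> complex" where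
  "psi_coeff a b c d e q n k =
     qbinom q n k * (-1) ^ k * complex_of_real (q powi (int k * (int k - int n))) *
     (qpoch a q k * qpoch b q k * qpoch c q k) / (qpoch d q k * qpoch e q k)"

definition psi :: "complex \<Rightarrow> complex \<Rightarrow> complex \<Rightarrow> complex \<Rightarrow> complex \<Rightarrow> real
    \<Rightarrow> nat \<Rightarrow> complex \<Rightarrow> complex \<Rightarrow> complex" where
  "psi a b c d e q n x y = (\<Sum>k\<le>n. psi_coeff a b c d e q n k * x ^ (n - k) * y ^ k)"

text \<open>Analyticity of a function of 7 complex variables in a neighbourhood of the origin:
  it is given on some polydisc around 0 by a convergent (unconditionally, equivalently
  absolutely) multivariate power series.\<close>
definition analytic_at_origin7 ::
  "(complex \<Rightarrow> complex \<Rightarrow> complex \<Rightarrow> complex \<Rightarrow> complex \<Rightarrow> complex \<Rightarrow> complex \<Rightarrow> complex) \<Rightarrow> bool"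
where
  "analytic_at_origin7 f \<longleftrightarrow>
     (\<exists>r>0. \<exists>C :: nat \<times> nat \<times> nat \<times> nat \<times> nat \<times> nat \<times> nat \<Rightarrow> complex.
        \<forall>z1 z2 z3 z4 z5 z6 z7. norm z1 < r \<and> norm z2 < r \<and> norm z3 < r \<and> norm z4 < r \<and>
           norm z5 < r \<and> norm z6 < r \<and> norm z7 < r \<longrightarrow>
           ((\<lambda>(i1, i2, i3, i4, i5, i6, i7). C (i1, i2, i3, i4, i5, i6, i7) *
               z1 ^ i1 * z2 ^ i2 * z3 ^ i3 * z4 ^ i4 * z5 ^ i5 * z6 ^ i6 * z7 ^ i7)
             has_sum f z1 z2 z3 z4 z5 z6 z7) UNIV)"

definition taylor_coeff2 :: "(complex \<Rightarrow> complex \<Rightarrow> complex) \<Rightarrow> nat \<Rightarrow> nat \<Rightarrow> complex" where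
  "taylor_coeff2 F j k =
     (deriv ^^ j) (\<lambda>X. (deriv ^^ k) (\<lambda>Y. F X Y) 0) 0 / (fact j * fact k)"

end

theory Submission
  imports Defs
begin

lemma coeff1:
  fixes b :: "nat \<Rightarrow> complex" and h :: "complex \<Rightarrow> complex"
  assumes r: "r > 0" and hs: "\<And>y. norm y < r \<Longrightarrow> ((\<lambda>k. b k * y ^ k) has_sum h y) UNIV"
  shows "(deriv ^^ n) h 0 = fact n * b n"
proof -
  define F where "F = Abs_fps b"
  have sm: "summable (\<lambda>k. b k * complex_of_real (r/2) ^ k)"
    using hs[of "complex_of_real (r/2)"] r has_sum_imp_sums sums_summable by (auto simp: norm_divide)
  have "fps_conv_radius F \<ge> norm (complex_of_real (r/2))"
    unfolding F_def fps_conv_radius_def using conv_radius_geI[OF sm] by simp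
  moreover have "norm (complex_of_real (r/2)) = r/2" using r by simp
  ultimately have rad: "fps_conv_radius F > 0" using r
    by (metis ereal_less(2) half_gt_zero order_less_le_trans)
  have ev: "eventually (\<lambda>z. eval_fps F z = h z) (nhds 0)"
  proof -
    have "eventually (\<lambda>z. z \<in> ball 0 r) (nhds (0::complex))" using eventually_nhds_ball r by blast
    then show ?thesis
    proof (rule eventually_mono)
      fix z :: complex assume "z \<in> ball 0 r"
      hence "(\<lambda>k. b k * z ^ k) sums h z" using hs has_sum_imp_sums by auto
      thus "eval_fps F z = h z" unfolding eval_fps_def F_def by (simp add: sums_iff)
    qed
  qed
  have "h has_fps_expansion F" using rad ev by (simp add: has_fps_expansion_def)
  from fps_nth_fps_expansion[OF this, of n] show ?thesis by (simp add: F_def)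
qed

lemma has_sum_swap2:
  fixes g :: "nat \<Rightarrow> nat \<Rightarrow> 'a::{comm_monoid_add,topological_space}"
  shows "((\<lambda>(k,j). g j k) has_sum s) UNIV \<longleftrightarrow> ((\<lambda>(j,k). g j k) has_sum s) UNIV"
  by (rule has_sum_reindex_bij_witness[of UNIV prod.swap prod.swap]) auto

lemma coeff2:
  fixes D :: "nat \<times> nat \<Rightarrow> complex" and H :: "complex \<Rightarrow> complex \<Rightarrow> complex"
  assumes r: "r > 0"
    and hs: "\<And>x y. norm x < r \<Longrightarrow> norm y < r \<Longrightarrow>
       ((\<lambda>(j,k). D (j,k) * x ^ j * y ^ k) has_sum H x y) UNIV"
  shows "taylor_coeff2 H j k = D (j,k)"
proof -
  define y0 where "y0 = complex_of_real (r/2)"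
  have y0: "norm y0 < r" "y0 \<noteq> 0" using r by (auto simp: y0_def)
  define b where "b k X = infsum (\<lambda>j. D (j,k) * X ^ j) UNIV" for k X
  have inner: "((\<lambda>j. D (j,k) * X ^ j) has_sum b k X) UNIV" if X: "norm X < r" for k X
  proof -
    have "((\<lambda>(j,k). D (j,k) * X ^ j * y0 ^ k) has_sum H X y0) UNIV" using hs X y0 by auto
    hence "((\<lambda>(k,j). D (j,k) * X ^ j * y0 ^ k) has_sum H X y0) UNIV"
      using has_sum_swap2[of "\<lambda>j k. D (j,k) * X ^ j * y0 ^ k"] by simp
    hence "(\<lambda>(k,j). D (j,k) * X ^ j * y0 ^ k) summable_on Sigma UNIV (\<lambda>_. UNIV)"
      by (auto simp: has_sum_imp_summable)
    hence "(\<lambda>j. D (j,k) * X ^ j * y0 ^ k) summable_on UNIV"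
      using summable_on_SigmaD1[of "\<lambda>k j. D (j,k) * X ^ j * y0 ^ k" UNIV "\<lambda>_. UNIV" k] by auto
    hence "(\<lambda>j. (D (j,k) * X ^ j * y0 ^ k) * inverse (y0 ^ k)) summable_on UNIV"
      by (rule summable_on_cmult_left)
    moreover have "\<And>j. D (j,k) * X ^ j * y0 ^ k * inverse (y0 ^ k) = D (j,k) * X ^ j" using y0 by simp
    ultimately have "(\<lambda>j. D (j,k) * X ^ j) summable_on UNIV" by simp
    thus ?thesis unfolding b_def by (rule has_sum_infsum)
  qed
  have row: "((\<lambda>k. b k X * Y ^ k) has_sum H X Y) UNIV" if X: "norm X < r" and Y: "norm Y < r" for X Y
  proof -
    have "((\<lambda>(j,k). D (j,k) * X ^ j * Y ^ k) has_sum H X Y) UNIV" using hs X Y by auto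
    hence "((\<lambda>(k,j). D (j,k) * X ^ j * Y ^ k) has_sum H X Y) (Sigma UNIV (\<lambda>_. UNIV))"
      using has_sum_swap2[of "\<lambda>j k. D (j,k) * X ^ j * Y ^ k"] by simp
    thus ?thesis
    proof (rule has_sum_Sigma')
      fix k :: nat
      show "((\<lambda>j. (\<lambda>(k,j). D (j,k) * X ^ j * Y ^ k) (k, j)) has_sum b k X * Y ^ k) UNIV"
        using has_sum_cmult_left[OF inner[OF X, of k], of "Y ^ k"] by simp
    qed
  qed
  have dk: "(deriv ^^ k) (\<lambda>Y. H X Y) 0 = fact k * b k X" if X: "norm X < r" for X
    using coeff1[OF r, of "\<lambda>k. b k X" "\<lambda>Y. H X Y" k] row[OF X] by simp
  have "((\<lambda>j. (fact k * D (j,k)) * X ^ j) has_sum (deriv ^^ k) (\<lambda>Y. H X Y) 0) UNIV" if X: "norm X < r" for X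
    using has_sum_cmult_right[OF inner[OF X, of k], of "fact k"] dk[OF X] by (simp add: mult.assoc)
  hence "(deriv ^^ j) (\<lambda>X. (deriv ^^ k) (\<lambda>Y. H X Y) 0) 0 = fact j * (fact k * D (j,k))"
    using coeff1[OF r, of "\<lambda>j. fact k * D (j,k)" "\<lambda>X. (deriv ^^ k) (\<lambda>Y. H X Y) 0" j] by simp
  thus ?thesis unfolding taylor_coeff2_def by simp
qed

lemma fiber_lemma:
  fixes W :: "'i \<Rightarrow> complex" and c :: complex
  assumes "(\<lambda>i. W i * c) summable_on UNIV"
  shows "((\<lambda>i. W i * c) has_sum (infsum W UNIV * c)) UNIV"
proof (cases "c = 0")
  case True thus ?thesis by simp
next
  case False
  have "(\<lambda>i. W i * c * inverse c) summable_on UNIV" using assms by (rule summable_on_cmult_left)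
  moreover have "(\<lambda>i. W i * c * inverse c) = W" using False by (auto simp: fun_eq_iff)
  ultimately have "W summable_on UNIV" by simp
  thus ?thesis by (intro has_sum_cmult_left has_sum_infsum)
qed

lemma reindex7: "((\<lambda>(i1, i2, i3, i4, i5, i6, i7). (C (i1, i2, i3, i4, i5, i6, i7)::complex) *
               a ^ i1 * b ^ i2 * c ^ i3 * d ^ i4 * e ^ i5 * x ^ i6 * y ^ i7)
             has_sum s) UNIV = ((\<lambda>((j,k),i). (\<lambda>(i1, i2, i3, i4, i5). C (i1, i2, i3, i4, i5, j, k) * a ^ i1 * b ^ i2 * c ^ i3 * d ^ i4 * e ^ i5) i * (x ^ j * y ^ k)) has_sum s) UNIV"
  apply (rule has_sum_reindex_bij_witness[of UNIV "\<lambda>((j,k),(i1, i2, i3, i4, i5)). (i1, i2, i3, i4, i5, j, k)"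
            "\<lambda>(i1, i2, i3, i4, i5, j, k). ((j,k),(i1, i2, i3, i4, i5))"])
  apply (auto simp: mult.assoc)
  done

lemma analytic_two:
  assumes "analytic_at_origin7 f"
  obtains r where "r > 0" "\<And>a b c d e. norm a < r \<Longrightarrow> norm b < r \<Longrightarrow> norm c < r \<Longrightarrow> norm d < r \<Longrightarrow> norm e < r \<Longrightarrow>
     \<exists>G. \<forall>x y. norm x < r \<longrightarrow> norm y < r \<longrightarrow> ((\<lambda>(j,k). G (j,k) * x ^ j * y ^ k) has_sum f a b c d e x y) UNIV"
proof -
  from assms obtain r and C :: "nat \<times> nat \<times> nat \<times> nat \<times> nat \<times> nat \<times> nat \<Rightarrow> complex" where r: "r > 0" and hs: "\<forall>z1 z2 z3 z4 z5 z6 z7. norm z1 < r \<and> norm z2 < r \<and> norm z3 < r \<and> norm z4 < r \<and>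
           norm z5 < r \<and> norm z6 < r \<and> norm z7 < r \<longrightarrow>
           ((\<lambda>(i1, i2, i3, i4, i5, i6, i7). C (i1, i2, i3, i4, i5, i6, i7) *
               z1 ^ i1 * z2 ^ i2 * z3 ^ i3 * z4 ^ i4 * z5 ^ i5 * z6 ^ i6 * z7 ^ i7)
             has_sum f z1 z2 z3 z4 z5 z6 z7) UNIV"
    unfolding analytic_at_origin7_def by blast
  show ?thesis
  proof (rule that[OF r])
    fix a b c d e :: complex
    assume abcde: "norm a < r" "norm b < r" "norm c < r" "norm d < r" "norm e < r"
    define W where "W j k = (\<lambda>(i1, i2, i3, i4, i5). C (i1, i2, i3, i4, i5, j, k) * a ^ i1 * b ^ i2 * c ^ i3 * d ^ i4 * e ^ i5)" for j k
    define G where "G = (\<lambda>(j,k). infsum (W j k) UNIV)"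
    have "((\<lambda>(j,k). G (j,k) * x ^ j * y ^ k) has_sum f a b c d e x y) UNIV" if xy: "norm x < r" "norm y < r" for x y
    proof -
      let ?g = "\<lambda>((j,k),i). W j k i * (x ^ j * y ^ k)"
      have h7: "((\<lambda>(i1, i2, i3, i4, i5, i6, i7). C (i1, i2, i3, i4, i5, i6, i7) *
               a ^ i1 * b ^ i2 * c ^ i3 * d ^ i4 * e ^ i5 * x ^ i6 * y ^ i7)
             has_sum f a b c d e x y) UNIV" using hs[rule_format, of a b c d e x y] abcde xy by simp
      have "(?g has_sum f a b c d e x y) UNIV"
        using h7 unfolding reindex7 W_def .
      hence g: "(?g has_sum f a b c d e x y) (Sigma UNIV (\<lambda>_. UNIV))" by simp
      show ?thesis
      proof (rule has_sum_Sigma'[OF g])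
        fix jk :: "nat \<times> nat"
        obtain j k where jk: "jk = (j,k)" by fastforce
        have "(\<lambda>(jk, i). ?g (jk, i)) summable_on Sigma UNIV (\<lambda>_. UNIV)"
          using g has_sum_imp_summable by (simp add: case_prod_beta')
        hence "(\<lambda>i. ?g (jk, i)) summable_on UNIV"
          using summable_on_SigmaD1[of "\<lambda>jk i. ?g (jk, i)" UNIV "\<lambda>_. UNIV" jk] by simp
        hence "(\<lambda>i. W j k i * (x ^ j * y ^ k)) summable_on UNIV" by (simp add: jk)
        from fiber_lemma[OF this]
        show "((\<lambda>i. ?g (jk, i)) has_sum (\<lambda>(j,k). G (j,k) * x ^ j * y ^ k) jk) UNIV"
          by (simp add: jk G_def mult.assoc)
      qed
    qed
    thus "\<exists>G. \<forall>x y. norm x < r \<longrightarrow> norm y < r \<longrightarrow> ((\<lambda>(j,k). G (j,k) * x ^ j * y ^ k) has_sum f a b c d e x y) UNIV"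
      by blast
  qed
qed

lemma has_sum_diff':
  fixes f g :: "'a \<Rightarrow> complex"
  assumes "(f has_sum a) A" "(g has_sum b) A"
  shows "((\<lambda>x. f x - g x) has_sum (a - b)) A"
  using has_sum_add[OF assms(1) has_sum_uminusI[OF assms(2)]] by simp

lemma shift_x:
  fixes g :: "nat \<Rightarrow> nat \<Rightarrow> complex"
  assumes "((\<lambda>(j,k). g j k) has_sum s) UNIV"
  shows "((\<lambda>(J,K). if J = 0 then 0 else g (J - 1) K) has_sum s) UNIV"
proof -
  let ?h = "\<lambda>(j::nat,k::nat). (Suc j, k)"
  have inj: "inj_on ?h UNIV" by (auto simp: inj_on_def)
  have "(((\<lambda>(J,K). if J = 0 then 0 else g (J - 1) K) \<circ> ?h) has_sum s) UNIV"
    using assms by (simp add: o_def case_prod_beta')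
  hence "((\<lambda>(J,K). if J = 0 then 0 else g (J - 1) K) has_sum s) (?h ` UNIV)"
    using has_sum_reindex[OF inj] by blast
  moreover have "?h ` UNIV = {p. fst p \<noteq> 0}"
  proof (rule set_eqI)
    fix p :: "nat \<times> nat" obtain J K where p: "p = (J,K)" by fastforce
    show "p \<in> ?h ` UNIV \<longleftrightarrow> p \<in> {p. fst p \<noteq> 0}"
    proof
      assume "p \<in> ?h ` UNIV" thus "p \<in> {p. fst p \<noteq> 0}" by auto
    next
      assume "p \<in> {p. fst p \<noteq> 0}" hence "J \<noteq> 0" by (simp add: p)
      then obtain m where "J = Suc m" using not0_implies_Suc by blast
      hence "p = ?h (m,K)" by (simp add: p)
      thus "p \<in> ?h ` UNIV" by blast
    qed
  qed
  ultimately have hs: "((\<lambda>(J,K). if J = 0 then 0 else g (J - 1) K) has_sum s) {p. fst p \<noteq> 0}" by simp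
  show ?thesis
    by (rule has_sum_cong_neutral[THEN iffD1, OF _ _ _ hs]) auto
qed

lemma shift_y:
  fixes g :: "nat \<Rightarrow> nat \<Rightarrow> complex"
  assumes "((\<lambda>(j,k). g j k) has_sum s) UNIV"
  shows "((\<lambda>(J,K). if K = 0 then 0 else g J (K - 1)) has_sum s) UNIV"
proof -
  let ?h = "\<lambda>(j::nat,k::nat). (j, Suc k)"
  have inj: "inj_on ?h UNIV" by (auto simp: inj_on_def)
  have "(((\<lambda>(J,K). if K = 0 then 0 else g J (K - 1)) \<circ> ?h) has_sum s) UNIV"
    using assms by (simp add: o_def case_prod_beta')
  hence "((\<lambda>(J,K). if K = 0 then 0 else g J (K - 1)) has_sum s) (?h ` UNIV)"
    using has_sum_reindex[OF inj] by blast
  moreover have "?h ` UNIV = {p. snd p \<noteq> 0}"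
  proof (rule set_eqI)
    fix p :: "nat \<times> nat" obtain J K where p: "p = (J,K)" by fastforce
    show "p \<in> ?h ` UNIV \<longleftrightarrow> p \<in> {p. snd p \<noteq> 0}"
    proof
      assume "p \<in> ?h ` UNIV" thus "p \<in> {p. snd p \<noteq> 0}" by auto
    next
      assume "p \<in> {p. snd p \<noteq> 0}" hence "K \<noteq> 0" by (simp add: p)
      then obtain m where "K = Suc m" using not0_implies_Suc by blast
      hence "p = ?h (J,m)" by (simp add: p)
      thus "p \<in> ?h ` UNIV" by blast
    qed
  qed
  ultimately have hs: "((\<lambda>(J,K). if K = 0 then 0 else g J (K - 1)) has_sum s) {p. snd p \<noteq> 0}" by simp
  show ?thesis
    by (rule has_sum_cong_neutral[THEN iffD1, OF _ _ _ hs]) auto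
qed

definition Lf :: "complex \<Rightarrow> complex \<Rightarrow> complex \<Rightarrow> nat \<Rightarrow> complex" where
  "Lf Q d e k = 1 - Q^k - (d+e)/Q*(Q^k - (Q^2)^k) + d*e/Q^2*((Q^2)^k - (Q^3)^k)"

definition Rf :: "complex \<Rightarrow> complex \<Rightarrow> complex \<Rightarrow> complex \<Rightarrow> nat \<Rightarrow> nat \<Rightarrow> complex" where
  "Rf Q a b c j k = (Q^j*Q^k - Q^k) - (a+b+c)*(Q^j*(Q^2)^k - (Q^2)^k)
     + (a*b+a*c+b*c)*(Q^j*(Q^3)^k - (Q^3)^k) - a*b*c*(Q^j*(Q^4)^k - (Q^4)^k)"

definition E1 where "E1 G Q d e = (\<lambda>(J,K). if J = 0 then 0 else G (J - 1, K) * Q ^ (J - 1) * Lf Q d e K)"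
definition E2 where "E2 G Q a b c = (\<lambda>(J,K). if K = 0 then 0 else G (J, K - 1) * Rf Q a b c J (K - 1))"

lemma auxL: fixes x y g Q A B Q2 Q3 :: complex shows
  "x * (g*(x*Q)^j*y^k - g*(x*Q)^j*(y*Q)^k - A*(g*(x*Q)^j*(y*Q)^k - g*(x*Q)^j*(y*Q2)^k) + B*(g*(x*Q)^j*(y*Q2)^k - g*(x*Q)^j*(y*Q3)^k))
   = x * (g * Q^j * (1 - Q^k - A*(Q^k - Q2^k) + B*(Q2^k - Q3^k))) * x^j * y^k"
  by (simp add: power_mult_distrib algebra_simps)
lemma auxR: fixes x y g Q A B C D :: complex shows
  "y * ((g*(x*Q)^j*(y*Q)^k - g*x^j*(y*Q)^k) - A*(g*(x*Q)^j*(y*Q^2)^k - g*x^j*(y*Q^2)^k)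
     + B*(g*(x*Q)^j*(y*Q^3)^k - g*x^j*(y*Q^3)^k) - C*(g*(x*Q)^j*(y*Q^4)^k - g*x^j*(y*Q^4)^k))
   = y * (g * ((Q^j*Q^k - Q^k) - A*(Q^j*(Q^2)^k - (Q^2)^k) + B*(Q^j*(Q^3)^k - (Q^3)^k) - C*(Q^j*(Q^4)^k - (Q^4)^k))) * x^j * y^k"
  by (simp add: power_mult_distrib algebra_simps)

lemma E1_eq: "(\<lambda>(J,K). if J = 0 then 0 else x * (G (J - 1, K) * Q ^ (J - 1) * Lf Q d e K) * x ^ (J - 1) * y ^ K)
   = (\<lambda>(J,K). E1 G Q d e (J,K) * x ^ J * y ^ K)"
proof (intro ext, clarify)
  fix J K show "(if J = 0 then 0 else x * (G (J - 1, K) * Q ^ (J - 1) * Lf Q d e K) * x ^ (J - 1) * y ^ K)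
   = E1 G Q d e (J,K) * x ^ J * y ^ K"
    by (cases J) (simp_all add: E1_def mult_ac)
qed

lemma lhs_series:
  fixes F :: "complex \<Rightarrow> complex \<Rightarrow> complex" and G :: "nat \<times> nat \<Rightarrow> complex"
  assumes hG: "\<And>x y. norm x < r \<Longrightarrow> norm y < r \<Longrightarrow> ((\<lambda>(j,k). G (j,k) * x ^ j * y ^ k) has_sum F x y) UNIV"
    and q: "0 < q" "q < 1" and Q: "Q = complex_of_real q" and x: "norm x < r" and y: "norm y < r"
  shows "((\<lambda>(J,K). E1 G Q d e (J,K) * x ^ J * y ^ K) has_sum
     (x * (F (x*Q) y - F (x*Q) (y*Q) - (d + e) / Q * (F (x*Q) (y*Q) - F (x*Q) (y*Q^2))
             + d * e / Q^2 * (F (x*Q) (y*Q^2) - F (x*Q) (y*Q^3))))) UNIV"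
proof -
  have nQ: "norm Q \<le> 1" using q Q by simp
  have sm: "norm (z * Q ^ m) < r" if "norm z < r" for z m
  proof -
    have "norm (z * Q^m) = norm z * norm Q ^ m" by (simp add: norm_mult norm_power)
    also have "\<dots> \<le> norm z" using nQ by (simp add: mult_left_le power_le_one)
    finally show ?thesis using that by simp
  qed
  have s1: "norm (x*Q) < r" using sm[OF x, of 1] by simp
  have s2: "norm (y*Q) < r" using sm[OF y, of 1] by simp
  note h1 = hG[OF s1 y] and h2 = hG[OF s1 s2] and h3 = hG[OF s1 sm[OF y, of 2]] and h4 = hG[OF s1 sm[OF y, of 3]]
  have c: "((\<lambda>p. x * ((\<lambda>(j,k). G (j,k) * (x*Q) ^ j * y ^ k) p - (\<lambda>(j,k). G (j,k) * (x*Q) ^ j * (y*Q) ^ k) p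
     - (d + e) / Q * ((\<lambda>(j,k). G (j,k) * (x*Q) ^ j * (y*Q) ^ k) p - (\<lambda>(j,k). G (j,k) * (x*Q) ^ j * (y*Q^2) ^ k) p)
     + d * e / Q^2 * ((\<lambda>(j,k). G (j,k) * (x*Q) ^ j * (y*Q^2) ^ k) p - (\<lambda>(j,k). G (j,k) * (x*Q) ^ j * (y*Q^3) ^ k) p)))
     has_sum (x * (F (x*Q) y - F (x*Q) (y*Q) - (d + e) / Q * (F (x*Q) (y*Q) - F (x*Q) (y*Q^2))
             + d * e / Q^2 * (F (x*Q) (y*Q^2) - F (x*Q) (y*Q^3))))) UNIV"
    by (intro has_sum_cmult_right has_sum_add has_sum_diff' h1 h2 h3 h4)
  have "((\<lambda>(j,k). x * (G (j,k) * Q ^ j * Lf Q d e k) * x ^ j * y ^ k) has_sum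
     (x * (F (x*Q) y - F (x*Q) (y*Q) - (d + e) / Q * (F (x*Q) (y*Q) - F (x*Q) (y*Q^2))
             + d * e / Q^2 * (F (x*Q) (y*Q^2) - F (x*Q) (y*Q^3))))) UNIV"
    by (rule has_sum_cong[THEN iffD1, OF _ c])
       (clarsimp simp only: split_paired_all case_prod_conv auxL Lf_def)
  from shift_x[OF this] show ?thesis
    unfolding E1_eq .
qed

lemma qpoch_Suc: "qpoch \<alpha> q (Suc m) = qpoch \<alpha> q m * (1 - \<alpha> * complex_of_real q ^ m)"
  by (simp add: qpoch_def)

lemma qpoch_nz: assumes "norm \<alpha> < 1" "0 < q" "q < 1" shows "qpoch \<alpha> q m \<noteq> 0"
proof -
  have "1 - \<alpha> * complex_of_real q ^ j \<noteq> 0" for j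
  proof
    assume "1 - \<alpha> * complex_of_real q ^ j = 0"
    hence "norm (\<alpha> * complex_of_real q ^ j) = 1" by (metis eq_iff_diff_eq_0 norm_one)
    moreover have "norm (\<alpha> * complex_of_real q ^ j) \<le> norm \<alpha>"
      using assms by (simp add: norm_mult norm_power mult_left_le power_le_one)
    ultimately show False using assms by simp
  qed
  thus ?thesis by (simp add: qpoch_def)
qed

lemma qpoch_q_nz: assumes "0 < q" "q < 1" shows "qpoch (complex_of_real q) q m \<noteq> 0"
  using qpoch_nz[of "complex_of_real q" q m] assms by simp

lemma Lf0: "Lf Q d e 0 = 0" by (simp add: Lf_def)
lemma Rf0: "Rf Q a b c 0 k = 0" by (simp add: Rf_def)

lemma pow_comm: "((Q::complex) ^ m) ^ k = (Q ^ k) ^ m" by (simp add: power_mult[symmetric] mult.commute)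

lemma Lgen: fixes Q v d e :: complex assumes "Q \<noteq> 0"
  shows "1 - Q * v - (d + e) / Q * (Q * v - (Q * v) ^ 2) + d * e / Q ^ 2 * ((Q * v) ^ 2 - (Q * v) ^ 3) = (1 - Q * v) * (1 - d * v) * (1 - e * v)"
  using assms by (simp add: field_simps power2_eq_square power3_eq_cube)

lemma Lf_Suc: assumes "Q \<noteq> 0" shows "Lf Q d e (Suc k) = (1 - Q ^ Suc k) * (1 - d * Q ^ k) * (1 - e * Q ^ k)"
  unfolding Lf_def pow_comm[of Q _ "Suc k"] using Lgen[OF assms, of "Q^k" d e] by simp

lemma Rgen: fixes Q vv uu :: complex
  shows "(uu * vv - vv) - (a+b+c)*(uu * vv ^ 2 - vv ^ 2) + (a*b+a*c+b*c)*(uu * vv ^ 3 - vv ^ 3) - a*b*c*(uu * vv ^ 4 - vv ^ 4)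
    = vv * (uu - 1) * (1 - a * vv) * (1 - b * vv) * (1 - c * vv)"
  by (simp add: algebra_simps power2_eq_square power3_eq_cube power4_eq_xxxx)

lemma Rf_Suc: "Rf Q a b c (Suc j) k = Q ^ k * (Q ^ Suc j - 1) * (1 - a * Q ^ k) * (1 - b * Q ^ k) * (1 - c * Q ^ k)"
  unfolding Rf_def pow_comm[of Q _ k] using Rgen[of "Q^Suc j" "Q^k" a b c] by simp

lemma R0gen: "Rf Q a b c 0 k = 0" by (simp add: Rf_def)

lemma qpoch_0[simp]: "qpoch \<alpha> q 0 = 1" by (simp add: qpoch_def)

lemma psi0: assumes "0 < q" "q < 1" shows "psi_coeff a b c d e q n 0 = 1"
  using qpoch_q_nz[OF assms, of n] by (simp add: psi_coeff_def qbinom_def)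

lemma core:
  fixes P Ak Bj X Z pa pb pc pd pe A1 B1 C1 D E u v w :: complex
  assumes "Ak \<noteq> 0" "Bj \<noteq> 0" "X \<noteq> 0" "1 - Z \<noteq> 0" "pd \<noteq> 0" "pe \<noteq> 0" "D \<noteq> 0" "E \<noteq> 0" "u \<noteq> 0" "v \<noteq> 0" "w \<noteq> 0"
  shows "P / (Ak * X * Bj) * (- 1 * (- 1) ^ k) * inverse (u * w) * (pa * A1 * (pb * B1) * (pc * C1)) / (pd * D * (pe * E))
           * u * (X * D * E)
       = P / (Ak * (Bj * (1 - Z))) * (-1) ^ k * inverse (w * v) * (pa * pb * pc) / (pd * pe)
           * (v * (Z - 1) * A1 * B1 * C1)"
proof -
  have "Z - 1 = - (1 - Z)" by simp
  thus ?thesis using assms by (simp add: field_simps)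
qed

lemma psirec:
  assumes q: "0 < q" "q < 1" and d: "norm d < 1" and e: "norm e < 1"
  shows "psi_coeff a b c d e q (Suc (j + k)) (Suc k) * complex_of_real q ^ j * Lf (complex_of_real q) d e (Suc k)
       = psi_coeff a b c d e q (Suc (j + k)) k * Rf (complex_of_real q) a b c (Suc j) k"
proof -
  define Q where "Q = complex_of_real q"
  define n where "n = Suc (j + k)"
  have Q0: "Q \<noteq> 0" using q by (simp add: Q_def)
  have n1: "n - Suc k = j" "n - k = Suc j" by (simp_all add: n_def)
  have pw1: "complex_of_real (q powi (int (Suc k) * (int (Suc k) - int n))) = inverse (Q ^ j * Q ^ (k * j))"
  proof -
    have ex: "int (Suc k) * (int (Suc k) - int n) = - int (j + k * j)" by (simp add: n_def algebra_simps)
    have "q powi (int (Suc k) * (int (Suc k) - int n)) = inverse (q ^ (j + k * j))"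
      by (simp only: ex power_int_minus power_int_of_nat)
    thus ?thesis by (simp add: Q_def power_add)
  qed
  have pw2: "complex_of_real (q powi (int k * (int k - int n))) = inverse (Q ^ (k * j) * Q ^ k)"
  proof -
    have ex: "int k * (int k - int n) = - int (k * j + k)" by (simp add: n_def algebra_simps)
    have "q powi (int k * (int k - int n)) = inverse (q ^ (k * j + k))"
      by (simp only: ex power_int_minus power_int_of_nat)
    thus ?thesis by (simp add: Q_def power_add)
  qed
  have X: "1 - Q ^ Suc m \<noteq> 0" for m
  proof -
    have "q ^ Suc m < 1" using q by (rule power_Suc_less_one)
    hence "Q ^ Suc m \<noteq> 1" unfolding Q_def by (metis less_irrefl of_real_eq_1_iff of_real_power)
    thus ?thesis by simp
  qed
  have Y: "1 - Q * Q ^ m \<noteq> 0" for m using X[of m] by simp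
  have Ak: "qpoch Q q m \<noteq> 0" for m unfolding Q_def by (rule qpoch_q_nz[OF q])
  have pd: "qpoch d q m \<noteq> 0" "qpoch e q m \<noteq> 0" for m using qpoch_nz[OF d q] qpoch_nz[OF e q] by auto
  have D: "1 - d * Q ^ k \<noteq> 0" "1 - e * Q ^ k \<noteq> 0"
    using pd[of "Suc k"] by (auto simp: qpoch_Suc Q_def)
  have Qp: "Q ^ m \<noteq> 0" for m using Q0 by simp
  have L: "psi_coeff a b c d e q n (Suc k) = qpoch Q q n / (qpoch Q q k * (1 - Q * Q ^ k) * qpoch Q q j) * (-1) ^ Suc k
     * inverse (Q ^ j * Q ^ (k * j)) * (qpoch a q k * (1 - a * Q ^ k) * (qpoch b q k * (1 - b * Q ^ k)) * (qpoch c q k * (1 - c * Q ^ k)))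
     / (qpoch d q k * (1 - d * Q ^ k) * (qpoch e q k * (1 - e * Q ^ k)))"
    unfolding psi_coeff_def qbinom_def n1 pw1 qpoch_Suc Q_def[symmetric] by (simp only: power_Suc)
  have R: "psi_coeff a b c d e q n k = qpoch Q q n / (qpoch Q q k * (qpoch Q q j * (1 - Q * Q ^ j))) * (-1) ^ k
     * inverse (Q ^ (k * j) * Q ^ k) * (qpoch a q k * qpoch b q k * qpoch c q k)
     / (qpoch d q k * qpoch e q k)"
    unfolding psi_coeff_def qbinom_def n1 pw2 qpoch_Suc Q_def[symmetric] by (simp only: power_Suc)
  show ?thesis unfolding n_def[symmetric] Q_def[symmetric] L R Lf_Suc[OF Q0] Rf_Suc power_Suc
    by (rule core) (use Y Ak pd D Qp in auto)
qed

lemma E2_eq: "(\<lambda>(J,K). if K = 0 then 0 else y * (G (J, K - 1) * Rf Q a b c J (K - 1)) * x ^ J * y ^ (K - 1))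
   = (\<lambda>(J,K). E2 G Q a b c (J,K) * x ^ J * y ^ K)"
proof (intro ext, clarify)
  fix J K show "(if K = 0 then 0 else y * (G (J, K - 1) * Rf Q a b c J (K - 1)) * x ^ J * y ^ (K - 1))
   = E2 G Q a b c (J,K) * x ^ J * y ^ K"
    by (cases K) (simp_all add: E2_def mult_ac)
qed

lemma rhs_series:
  fixes F :: "complex \<Rightarrow> complex \<Rightarrow> complex" and G :: "nat \<times> nat \<Rightarrow> complex"
  assumes hG: "\<And>x y. norm x < r \<Longrightarrow> norm y < r \<Longrightarrow> ((\<lambda>(j,k). G (j,k) * x ^ j * y ^ k) has_sum F x y) UNIV"
    and q: "0 < q" "q < 1" and Q: "Q = complex_of_real q" and x: "norm x < r" and y: "norm y < r"
  shows "((\<lambda>(J,K). E2 G Q a b c (J,K) * x ^ J * y ^ K) has_sum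
     (y * ((F (x*Q) (y*Q) - F x (y*Q))
             - (a + b + c) * (F (x*Q) (y*Q^2) - F x (y*Q^2))
             + (a*b + a*c + b*c) * (F (x*Q) (y*Q^3) - F x (y*Q^3))
             - a*b*c * (F (x*Q) (y*Q^4) - F x (y*Q^4))))) UNIV"
proof -
  have nQ: "norm Q \<le> 1" using q Q by simp
  have sm: "norm (z * Q ^ m) < r" if "norm z < r" for z m
  proof -
    have "norm (z * Q^m) = norm z * norm Q ^ m" by (simp add: norm_mult norm_power)
    also have "\<dots> \<le> norm z" using nQ by (simp add: mult_left_le power_le_one)
    finally show ?thesis using that by simp
  qed
  have s1: "norm (x*Q) < r" using sm[OF x, of 1] by simp
  have s2: "norm (y*Q) < r" using sm[OF y, of 1] by simp
  note h1 = hG[OF s1 s2] and h2 = hG[OF x s2]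
   and h3 = hG[OF s1 sm[OF y, of 2]] and h4 = hG[OF x sm[OF y, of 2]]
   and h5 = hG[OF s1 sm[OF y, of 3]] and h6 = hG[OF x sm[OF y, of 3]]
   and h7 = hG[OF s1 sm[OF y, of 4]] and h8 = hG[OF x sm[OF y, of 4]]
  have c: "((\<lambda>p. y * (((\<lambda>(j,k). G (j,k) * (x*Q) ^ j * (y*Q) ^ k) p - (\<lambda>(j,k). G (j,k) * x ^ j * (y*Q) ^ k) p)
     - (a + b + c) * ((\<lambda>(j,k). G (j,k) * (x*Q) ^ j * (y*Q^2) ^ k) p - (\<lambda>(j,k). G (j,k) * x ^ j * (y*Q^2) ^ k) p)
     + (a*b + a*c + b*c) * ((\<lambda>(j,k). G (j,k) * (x*Q) ^ j * (y*Q^3) ^ k) p - (\<lambda>(j,k). G (j,k) * x ^ j * (y*Q^3) ^ k) p)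
     - a*b*c * ((\<lambda>(j,k). G (j,k) * (x*Q) ^ j * (y*Q^4) ^ k) p - (\<lambda>(j,k). G (j,k) * x ^ j * (y*Q^4) ^ k) p)))
     has_sum (y * ((F (x*Q) (y*Q) - F x (y*Q))
             - (a + b + c) * (F (x*Q) (y*Q^2) - F x (y*Q^2))
             + (a*b + a*c + b*c) * (F (x*Q) (y*Q^3) - F x (y*Q^3))
             - a*b*c * (F (x*Q) (y*Q^4) - F x (y*Q^4))))) UNIV"
    by (intro has_sum_cmult_right has_sum_add has_sum_diff' h1 h2 h3 h4 h5 h6 h7 h8)
  have "((\<lambda>(j,k). y * (G (j,k) * Rf Q a b c j k) * x ^ j * y ^ k) has_sum
     (y * ((F (x*Q) (y*Q) - F x (y*Q))
             - (a + b + c) * (F (x*Q) (y*Q^2) - F x (y*Q^2))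
             + (a*b + a*c + b*c) * (F (x*Q) (y*Q^3) - F x (y*Q^3))
             - a*b*c * (F (x*Q) (y*Q^4) - F x (y*Q^4))))) UNIV"
    by (rule has_sum_cong[THEN iffD1, OF _ c])
       (clarsimp simp only: split_paired_all case_prod_conv auxR Rf_def)
  from shift_y[OF this] show ?thesis
    unfolding E2_eq .
qed

lemma E_eq_iff:
  "E1 G Q d e = E2 G Q a b c \<longleftrightarrow>
    (\<forall>j k. G (j, Suc k) * Q ^ j * Lf Q d e (Suc k) = G (Suc j, k) * Rf Q a b c (Suc j) k)"
proof
  assume h: "E1 G Q d e = E2 G Q a b c"
  show "\<forall>j k. G (j, Suc k) * Q ^ j * Lf Q d e (Suc k) = G (Suc j, k) * Rf Q a b c (Suc j) k"
  proof (intro allI)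
    fix j k
    have "E1 G Q d e (Suc j, Suc k) = E2 G Q a b c (Suc j, Suc k)" using h by simp
    thus "G (j, Suc k) * Q ^ j * Lf Q d e (Suc k) = G (Suc j, k) * Rf Q a b c (Suc j) k"
      by (simp add: E1_def E2_def)
  qed
next
  assume h: "\<forall>j k. G (j, Suc k) * Q ^ j * Lf Q d e (Suc k) = G (Suc j, k) * Rf Q a b c (Suc j) k"
  show "E1 G Q d e = E2 G Q a b c"
  proof (intro ext, clarify)
    fix J K
    show "E1 G Q d e (J, K) = E2 G Q a b c (J, K)"
    proof (cases J)
      case 0 thus ?thesis by (cases K) (simp_all add: E1_def E2_def Rf0)
    next
      case (Suc j) thus ?thesis
        using h by (cases K) (simp_all add: E1_def E2_def Lf0)
    qed
  qed
qed

lemma Lf_nz: assumes q: "0 < q" "q < 1" and d: "norm d < 1" and e: "norm e < 1"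
  shows "Lf (complex_of_real q) d e (Suc k) \<noteq> 0"
proof -
  have Q0: "complex_of_real q \<noteq> 0" using q by simp
  have "qpoch (complex_of_real q) q (Suc k) \<noteq> 0" "qpoch d q (Suc k) \<noteq> 0" "qpoch e q (Suc k) \<noteq> 0"
    using qpoch_q_nz[OF q] qpoch_nz[OF d q] qpoch_nz[OF e q] by auto
  thus ?thesis by (simp add: Lf_Suc[OF Q0] qpoch_Suc)
qed

theorem theorem1:
  fixes q :: real
    and f :: "complex \<Rightarrow> complex \<Rightarrow> complex \<Rightarrow> complex \<Rightarrow> complex \<Rightarrow> complex \<Rightarrow> complex \<Rightarrow> complex"
  assumes q: "0 < q" "q < 1"
    and an: "analytic_at_origin7 f"
  shows
   "(\<exists>r>0. \<forall>a b c d e x y. norm a < r \<and> norm b < r \<and> norm c < r \<and> norm d < r \<and>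
        norm e < r \<and> norm x < r \<and> norm y < r \<longrightarrow>
      (let F = f a b c d e; Q = complex_of_real q in
        x * (F (x*Q) y - F (x*Q) (y*Q)
             - (d + e) / Q * (F (x*Q) (y*Q) - F (x*Q) (y*Q^2))
             + d * e / Q^2 * (F (x*Q) (y*Q^2) - F (x*Q) (y*Q^3)))
      = y * ((F (x*Q) (y*Q) - F x (y*Q))
             - (a + b + c) * (F (x*Q) (y*Q^2) - F x (y*Q^2))
             + (a*b + a*c + b*c) * (F (x*Q) (y*Q^3) - F x (y*Q^3))
             - a*b*c * (F (x*Q) (y*Q^4) - F x (y*Q^4)))))
    \<longleftrightarrow>
    (\<exists>r>0. \<exists>\<mu> :: nat \<Rightarrow> complex \<Rightarrow> complex \<Rightarrow> complex \<Rightarrow> complex \<Rightarrow> complex \<Rightarrow> complex.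
       \<forall>a b c d e. norm a < r \<and> norm b < r \<and> norm c < r \<and> norm d < r \<and> norm e < r \<longrightarrow>
         (\<forall>j k. taylor_coeff2 (f a b c d e) j k =
                 \<mu> (j + k) a b c d e * psi_coeff a b c d e q (j + k) k))"
proof -
  define Q where "Q = complex_of_real q"
  have Q0: "Q \<noteq> 0" using q by (simp add: Q_def)
  obtain r0 where r0: "r0 > 0" and AN: "\<And>a b c d e. norm a < r0 \<Longrightarrow> norm b < r0 \<Longrightarrow> norm c < r0 \<Longrightarrow> norm d < r0 \<Longrightarrow> norm e < r0 \<Longrightarrow>
     \<exists>G. \<forall>x y. norm x < r0 \<longrightarrow> norm y < r0 \<longrightarrow> ((\<lambda>(j,k). G (j,k) * x ^ j * y ^ k) has_sum f a b c d e x y) UNIV"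
    by (rule analytic_two[OF an], rule that, assumption+)
  show ?thesis
  proof
    assume "\<exists>r>0. \<forall>a b c d e x y. norm a < r \<and> norm b < r \<and> norm c < r \<and> norm d < r \<and>
        norm e < r \<and> norm x < r \<and> norm y < r \<longrightarrow>
      (let F = f a b c d e; Q = complex_of_real q in
        x * (F (x*Q) y - F (x*Q) (y*Q)
             - (d + e) / Q * (F (x*Q) (y*Q) - F (x*Q) (y*Q^2))
             + d * e / Q^2 * (F (x*Q) (y*Q^2) - F (x*Q) (y*Q^3)))
      = y * ((F (x*Q) (y*Q) - F x (y*Q))
             - (a + b + c) * (F (x*Q) (y*Q^2) - F x (y*Q^2))
             + (a*b + a*c + b*c) * (F (x*Q) (y*Q^3) - F x (y*Q^3))
             - a*b*c * (F (x*Q) (y*Q^4) - F x (y*Q^4))))"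
    then obtain r1 where r1: "r1 > 0" and EQ0: "\<forall>a b c d e x y. norm a < r1 \<and> norm b < r1 \<and> norm c < r1 \<and> norm d < r1 \<and>
        norm e < r1 \<and> norm x < r1 \<and> norm y < r1 \<longrightarrow>
      (let F = f a b c d e; Q = complex_of_real q in
        x * (F (x*Q) y - F (x*Q) (y*Q)
             - (d + e) / Q * (F (x*Q) (y*Q) - F (x*Q) (y*Q^2))
             + d * e / Q^2 * (F (x*Q) (y*Q^2) - F (x*Q) (y*Q^3)))
      = y * ((F (x*Q) (y*Q) - F x (y*Q))
             - (a + b + c) * (F (x*Q) (y*Q^2) - F x (y*Q^2))
             + (a*b + a*c + b*c) * (F (x*Q) (y*Q^3) - F x (y*Q^3))
             - a*b*c * (F (x*Q) (y*Q^4) - F x (y*Q^4))))" by blast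
    define \<rho> where "\<rho> = min r1 (min r0 1)"
    have \<rho>: "\<rho> > 0" "\<rho> \<le> r1" "\<rho> \<le> r0" "\<rho> \<le> 1" using r0 r1 by (auto simp: \<rho>_def)
    define \<mu> where "\<mu> n a b c d e = taylor_coeff2 (f a b c d e) n 0" for n a b c d e
    show "\<exists>r>0. \<exists>\<mu> :: nat \<Rightarrow> complex \<Rightarrow> complex \<Rightarrow> complex \<Rightarrow> complex \<Rightarrow> complex \<Rightarrow> complex.
       \<forall>a b c d e. norm a < r \<and> norm b < r \<and> norm c < r \<and> norm d < r \<and> norm e < r \<longrightarrow>
         (\<forall>j k. taylor_coeff2 (f a b c d e) j k =
                 \<mu> (j + k) a b c d e * psi_coeff a b c d e q (j + k) k)"
    proof (intro exI conjI allI impI)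
      show "\<rho> > 0" by (rule \<rho>)
      fix a b c d e :: complex and j k :: nat
      assume nrm: "norm a < \<rho> \<and> norm b < \<rho> \<and> norm c < \<rho> \<and> norm d < \<rho> \<and> norm e < \<rho>"
      then obtain G where hG: "\<And>x y. norm x < r0 \<Longrightarrow> norm y < r0 \<Longrightarrow> ((\<lambda>(j,k). G (j,k) * x ^ j * y ^ k) has_sum f a b c d e x y) UNIV"
        using AN[of a b c d e] \<rho> by auto
      have tc: "taylor_coeff2 (f a b c d e) j k = G (j,k)" for j k by (rule coeff2[OF r0 hG])
      have d1: "norm d < 1" "norm e < 1" using nrm \<rho> by auto
      define H where "H x y = x * (f a b c d e (x*Q) y - f a b c d e (x*Q) (y*Q)
             - (d + e) / Q * (f a b c d e (x*Q) (y*Q) - f a b c d e (x*Q) (y*Q^2))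
             + d * e / Q^2 * (f a b c d e (x*Q) (y*Q^2) - f a b c d e (x*Q) (y*Q^3)))" for x y
      have s1: "((\<lambda>(J,K). E1 G Q d e (J,K) * x ^ J * y ^ K) has_sum H x y) UNIV"
        if "norm x < \<rho>" "norm y < \<rho>" for x y
        unfolding H_def by (rule lhs_series[OF hG q Q_def]) (use that \<rho> in auto)
      have s2: "((\<lambda>(J,K). E2 G Q a b c (J,K) * x ^ J * y ^ K) has_sum H x y) UNIV"
        if "norm x < \<rho>" "norm y < \<rho>" for x y
      proof -
        have "H x y = y * ((f a b c d e (x*Q) (y*Q) - f a b c d e x (y*Q))
             - (a + b + c) * (f a b c d e (x*Q) (y*Q^2) - f a b c d e x (y*Q^2))
             + (a*b + a*c + b*c) * (f a b c d e (x*Q) (y*Q^3) - f a b c d e x (y*Q^3))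
             - a*b*c * (f a b c d e (x*Q) (y*Q^4) - f a b c d e x (y*Q^4)))"
        proof -
          have pre: "norm a < r1 \<and> norm b < r1 \<and> norm c < r1 \<and> norm d < r1 \<and>
              norm e < r1 \<and> norm x < r1 \<and> norm y < r1" using nrm that \<rho> by auto
          from EQ0[rule_format, OF pre] show ?thesis unfolding H_def Q_def Let_def .
        qed
        moreover have "norm x < r0" "norm y < r0" using that \<rho> by auto
        ultimately show ?thesis using rhs_series[OF hG q Q_def, where a=a and b=b and c=c] by auto
      qed
      have "E1 G Q d e = E2 G Q a b c"
      proof (intro ext, clarify)
        fix J K
        have "taylor_coeff2 H J K = (\<lambda>(J,K). E1 G Q d e (J,K)) (J,K)"
          by (rule coeff2[OF \<rho>(1)]) (use s1 in auto)
        moreover have "taylor_coeff2 H J K = (\<lambda>(J,K). E2 G Q a b c (J,K)) (J,K)"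
          by (rule coeff2[OF \<rho>(1)]) (use s2 in auto)
        ultimately show "E1 G Q d e (J,K) = E2 G Q a b c (J,K)" by simp
      qed
      hence rec: "\<And>j k. G (j, Suc k) * Q ^ j * Lf Q d e (Suc k) = G (Suc j, k) * Rf Q a b c (Suc j) k"
        using E_eq_iff by blast
      have main: "\<forall>j. G (j,k) = G (j+k, 0) * psi_coeff a b c d e q (j+k) k" for k
      proof (induction k)
        case 0 show ?case using psi0[OF q] by simp
      next
        case (Suc k)
        show ?case
        proof
          fix j
          have nz: "Q ^ j * Lf Q d e (Suc k) \<noteq> 0" using Lf_nz[OF q d1] Q0 unfolding Q_def by simp
          have "G (j, Suc k) * (Q ^ j * Lf Q d e (Suc k)) = G (Suc j, k) * Rf Q a b c (Suc j) k"
            using rec by (simp add: mult.assoc)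
          also have "\<dots> = G (Suc (j + k), 0) * (psi_coeff a b c d e q (Suc (j + k)) k * Rf Q a b c (Suc j) k)"
            using Suc.IH[rule_format, of "Suc j"] by simp
          also have "\<dots> = G (Suc (j + k), 0) * (psi_coeff a b c d e q (Suc (j + k)) (Suc k) * (Q ^ j * Lf Q d e (Suc k)))"
            using psirec[OF q d1, of a b c j k] unfolding Q_def by (simp add: mult.assoc)
          finally have "G (j, Suc k) = G (Suc (j + k), 0) * psi_coeff a b c d e q (Suc (j + k)) (Suc k)"
            using nz Q0 by (simp add: mult.assoc[symmetric])
          thus "G (j, Suc k) = G (j + Suc k, 0) * psi_coeff a b c d e q (j + Suc k) (Suc k)" by simp
        qed
      qed
      show "taylor_coeff2 (f a b c d e) j k = \<mu> (j + k) a b c d e * psi_coeff a b c d e q (j + k) k"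
        using main[of k] tc unfolding \<mu>_def by simp
    qed
  next
    assume "\<exists>r>0. \<exists>\<mu> :: nat \<Rightarrow> complex \<Rightarrow> complex \<Rightarrow> complex \<Rightarrow> complex \<Rightarrow> complex \<Rightarrow> complex.
       \<forall>a b c d e. norm a < r \<and> norm b < r \<and> norm c < r \<and> norm d < r \<and> norm e < r \<longrightarrow>
         (\<forall>j k. taylor_coeff2 (f a b c d e) j k =
                 \<mu> (j + k) a b c d e * psi_coeff a b c d e q (j + k) k)"
    then obtain r2 and \<mu> :: "nat \<Rightarrow> complex \<Rightarrow> complex \<Rightarrow> complex \<Rightarrow> complex \<Rightarrow> complex \<Rightarrow> complex"
      where r2: "r2 > 0" and MU: "\<And>a b c d e j k. norm a < r2 \<Longrightarrow> norm b < r2 \<Longrightarrow> norm c < r2 \<Longrightarrow> norm d < r2 \<Longrightarrow> norm e < r2 \<Longrightarrow>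
          taylor_coeff2 (f a b c d e) j k = \<mu> (j + k) a b c d e * psi_coeff a b c d e q (j + k) k"
      by blast
    define \<rho> where "\<rho> = min r2 (min r0 1)"
    have \<rho>: "\<rho> > 0" "\<rho> \<le> r2" "\<rho> \<le> r0" "\<rho> \<le> 1" using r0 r2 by (auto simp: \<rho>_def)
    show "\<exists>r>0. \<forall>a b c d e x y. norm a < r \<and> norm b < r \<and> norm c < r \<and> norm d < r \<and>
        norm e < r \<and> norm x < r \<and> norm y < r \<longrightarrow>
      (let F = f a b c d e; Q = complex_of_real q in
        x * (F (x*Q) y - F (x*Q) (y*Q)
             - (d + e) / Q * (F (x*Q) (y*Q) - F (x*Q) (y*Q^2))
             + d * e / Q^2 * (F (x*Q) (y*Q^2) - F (x*Q) (y*Q^3)))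
      = y * ((F (x*Q) (y*Q) - F x (y*Q))
             - (a + b + c) * (F (x*Q) (y*Q^2) - F x (y*Q^2))
             + (a*b + a*c + b*c) * (F (x*Q) (y*Q^3) - F x (y*Q^3))
             - a*b*c * (F (x*Q) (y*Q^4) - F x (y*Q^4))))"
    proof (intro exI conjI allI impI)
      show "\<rho> > 0" by (rule \<rho>)
      fix a b c d e x y :: complex
      assume nrm: "norm a < \<rho> \<and> norm b < \<rho> \<and> norm c < \<rho> \<and> norm d < \<rho> \<and> norm e < \<rho> \<and> norm x < \<rho> \<and> norm y < \<rho>"
      then obtain G where hG: "\<And>x y. norm x < r0 \<Longrightarrow> norm y < r0 \<Longrightarrow> ((\<lambda>(j,k). G (j,k) * x ^ j * y ^ k) has_sum f a b c d e x y) UNIV"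
        using AN[of a b c d e] \<rho> by auto
      have d1: "norm d < 1" "norm e < 1" using nrm \<rho> by auto
      have G: "G (j,k) = \<mu> (j + k) a b c d e * psi_coeff a b c d e q (j + k) k" for j k
        using coeff2[OF r0 hG, of j k] MU[of a b c d e j k] nrm \<rho> by auto
      have "\<forall>j k. G (j, Suc k) * Q ^ j * Lf Q d e (Suc k) = G (Suc j, k) * Rf Q a b c (Suc j) k"
      proof (intro allI)
        fix j k
        have "G (j, Suc k) * Q ^ j * Lf Q d e (Suc k) = \<mu> (Suc (j + k)) a b c d e *
            (psi_coeff a b c d e q (Suc (j + k)) (Suc k) * Q ^ j * Lf Q d e (Suc k))"
          by (simp add: G mult.assoc)
        also have "\<dots> = \<mu> (Suc (j + k)) a b c d e * (psi_coeff a b c d e q (Suc (j + k)) k * Rf Q a b c (Suc j) k)"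
          using psirec[OF q d1, of a b c j k] unfolding Q_def by simp
        also have "\<dots> = G (Suc j, k) * Rf Q a b c (Suc j) k" by (simp add: G mult.assoc)
        finally show "G (j, Suc k) * Q ^ j * Lf Q d e (Suc k) = G (Suc j, k) * Rf Q a b c (Suc j) k" .
      qed
      hence EE: "E1 G Q d e = E2 G Q a b c" using E_eq_iff by blast
      have xy: "norm x < r0" "norm y < r0" using nrm \<rho> by auto
      from lhs_series[OF hG q Q_def xy, where d=d and e=e] rhs_series[OF hG q Q_def xy, where a=a and b=b and c=c]
      show "let F = f a b c d e; Q = complex_of_real q in
        x * (F (x*Q) y - F (x*Q) (y*Q)
             - (d + e) / Q * (F (x*Q) (y*Q) - F (x*Q) (y*Q^2))
             + d * e / Q^2 * (F (x*Q) (y*Q^2) - F (x*Q) (y*Q^3)))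
      = y * ((F (x*Q) (y*Q) - F x (y*Q))
             - (a + b + c) * (F (x*Q) (y*Q^2) - F x (y*Q^2))
             + (a*b + a*c + b*c) * (F (x*Q) (y*Q^3) - F x (y*Q^3))
             - a*b*c * (F (x*Q) (y*Q^4) - F x (y*Q^4)))"
        unfolding Let_def Q_def[symmetric] EE using has_sum_unique by blast
    qed
  qed
qed

end
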